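(* Let $p\ge1$ and let $(\mu_k)_{k\ge1}$ and $\mu$ be probability measures in $\mathcal{P}_{p,ac}(S^{d-1})$ such that $\mu_k\to\mu$ weakly as $k\to\infty$. Then $SSW_p(\mu_k,\mu)\to0$ as $k\to\infty$.
   Context: $\mathcal{P}_{p,ac}(S^{d-1})$: probability measures on $S^{d-1}$ absolutely continuous w.r.t. the uniform measure with finite $p$-th moment. $\mathbb{V}_{d,2}=\{U\in\mathbb{R}^{d\times2}:U^TU=I_2\}$ with uniform probability $\sigma$; $P^U(x)=U^Tx/\|U^Tx\|_2$ for $U^Tx\neq0$. $W_p$ on $S^1$ uses the geodesic distance $d_{S^1}$. $SSW_p^p(\mu,\nu)=\int_{\mathbb{V}_{d,2}}W_p^p(P^U_\#\mu,P^U_\#\nu)\,\mathrm{d}\sigma(U)$. *)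

theory Defs
  imports "HOL-Probability.Probability"
begin

text \<open>Normalised uniform measure on the unit sphere S^{d-1}, realised as the
  push-forward of the normalised Lebesgue measure on the unit ball under
  radial projection x \<mapsto> x/|x| (the cone measure, equal to normalised surface measure).\<close>
definition sphere_unif :: "'a::euclidean_space measure" where
  "sphere_unif = distr (uniform_measure lborel (ball 0 1)) borel (\<lambda>x. x /\<^sub>R norm x)"

definition Pac :: "real \<Rightarrow> 'a::euclidean_space measure set" where
  "Pac p = {\<mu>. sets \<mu> = sets borel \<and> prob_space \<mu> \<and> emeasure \<mu> (sphere 0 1) = 1
              \<and> absolutely_continuous sphere_unif \<mu>
              \<and> (\<integral>\<^sup>+ x. ennreal (norm x powr p) \<partial>\<mu>) < \<infinity>}"

text \<open>Stiefel manifold V_{d,2}: pairs (u1,u2) of orthonormal vectors (the columns of U).\<close>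
definition stiefel2 :: "('a::euclidean_space \<times> 'a) set" where
  "stiefel2 = {(u1, u2). norm u1 = 1 \<and> norm u2 = 1 \<and> u1 \<bullet> u2 = 0}"

definition gram_schmidt2 :: "'a::euclidean_space \<times> 'a \<Rightarrow> 'a \<times> 'a" where
  "gram_schmidt2 = (\<lambda>(x, y). let u = x /\<^sub>R norm x; w = y - (y \<bullet> u) *\<^sub>R u in (u, w /\<^sub>R norm w))"

text \<open>Uniform (O(d)-invariant) probability measure on V_{d,2}: Gram--Schmidt of two
  independent uniform points of the unit ball.\<close>
definition stiefel_unif :: "('a::euclidean_space \<times> 'a) measure" where
  "stiefel_unif = distr (uniform_measure lborel (ball 0 1 \<times> ball 0 1)) borel gram_schmidt2"

text \<open>U^T x, identifying R^2 with the complex plane, and P^U(x) = U^T x / |U^T x| in S^1.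
  The value on the null set U^T x = 0 is fixed arbitrarily to 1.\<close>
definition projU :: "'a::euclidean_space \<times> 'a \<Rightarrow> 'a \<Rightarrow> complex" where
  "projU U x = Complex (fst U \<bullet> x) (snd U \<bullet> x)"

definition PU :: "'a::euclidean_space \<times> 'a \<Rightarrow> 'a \<Rightarrow> complex" where
  "PU U x = (if projU U x \<noteq> 0 then projU U x / complex_of_real (cmod (projU U x)) else 1)"

definition dS1 :: "complex \<Rightarrow> complex \<Rightarrow> real" where
  "dS1 z w = arccos (Re (z * cnj w))"

definition couplings :: "complex measure \<Rightarrow> complex measure \<Rightarrow> (complex \<times> complex) measure set" where
  "couplings \<mu> \<nu> = {\<gamma>. sets \<gamma> = sets borel \<and> prob_space \<gamma>
        \<and> distr \<gamma> borel fst = \<mu> \<and> distr \<gamma> borel snd = \<nu>}"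

definition Wpp_S1 :: "real \<Rightarrow> complex measure \<Rightarrow> complex measure \<Rightarrow> ennreal" where
  "Wpp_S1 p \<mu> \<nu> = (INF \<gamma>\<in>couplings \<mu> \<nu>. \<integral>\<^sup>+ z. ennreal (dS1 (fst z) (snd z) powr p) \<partial>\<gamma>)"

definition SSWpp :: "real \<Rightarrow> 'a::euclidean_space measure \<Rightarrow> 'a measure \<Rightarrow> ennreal" where
  "SSWpp p \<mu> \<nu> = (\<integral>\<^sup>+ U. Wpp_S1 p (distr \<mu> borel (PU U)) (distr \<nu> borel (PU U)) \<partial>stiefel_unif)"

text \<open>SSW_p itself (SSW_p^p is finite, being bounded by pi^p).\<close>
definition SSW :: "real \<Rightarrow> 'a::euclidean_space measure \<Rightarrow> 'a measure \<Rightarrow> real" where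
  "SSW p \<mu> \<nu> = enn2real (SSWpp p \<mu> \<nu>) powr (1 / p)"

definition weak_conv_sph :: "(nat \<Rightarrow> 'a::euclidean_space measure) \<Rightarrow> 'a measure \<Rightarrow> bool" where
  "weak_conv_sph \<mu>s \<mu> \<longleftrightarrow> (\<forall>f :: 'a \<Rightarrow> real. continuous_on UNIV f \<and> bounded (range f) \<longrightarrow>
      (\<lambda>k. \<integral>x. f x \<partial>(\<mu>s k)) \<longlonglongrightarrow> (\<integral>x. f x \<partial>\<mu>))"

end

theory Submission
  imports Defs
begin


lemma int_lin:
  fixes M :: "'a measure" and g :: "'t \<Rightarrow> 'a \<Rightarrow> real"
  assumes P: "prob_space M" and T: "finite T" and I: "\<And>t. t\<in>T \<Longrightarrow> integrable M (g t)"
  shows "(\<integral>y. (\<Sum>t\<in>T. C t * g t y) + D * (1 - (\<Sum>t\<in>T. K t * g t y)) \<partial>M)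
       = (\<Sum>t\<in>T. C t * integral\<^sup>L M (g t)) + D * (1 - (\<Sum>t\<in>T. K t * integral\<^sup>L M (g t)))"
proof -
  interpret prob_space M by fact
  have i1: "integrable M (\<lambda>y. \<Sum>t\<in>T. C t * g t y)" using I by auto
  have i2: "integrable M (\<lambda>y. \<Sum>t\<in>T. K t * g t y)" using I by auto
  have i3: "integrable M (\<lambda>y. 1 - (\<Sum>t\<in>T. K t * g t y))" using i2 by auto
  have "(\<integral>y. (\<Sum>t\<in>T. C t * g t y) + D * (1 - (\<Sum>t\<in>T. K t * g t y)) \<partial>M)
     = (\<integral>y. (\<Sum>t\<in>T. C t * g t y) \<partial>M) + D * (\<integral>y. 1 - (\<Sum>t\<in>T. K t * g t y) \<partial>M)"
    using i1 i3 by simp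
  also have "(\<integral>y. 1 - (\<Sum>t\<in>T. K t * g t y) \<partial>M) = 1 - (\<integral>y. (\<Sum>t\<in>T. K t * g t y) \<partial>M)"
    using i2 by (simp add: prob_space)
  also have "(\<integral>y. (\<Sum>t\<in>T. K t * g t y) \<partial>M) = (\<Sum>t\<in>T. K t * integral\<^sup>L M (g t))"
    using I by (simp add: Bochner_Integration.integral_sum)
  also have "(\<integral>y. (\<Sum>t\<in>T. C t * g t y) \<partial>M) = (\<Sum>t\<in>T. C t * integral\<^sup>L M (g t))"
    using I by (simp add: Bochner_Integration.integral_sum)
  finally show ?thesis .
qed


lemma int_lin_integrable:
  fixes M :: "'a measure" and g :: "'t \<Rightarrow> 'a \<Rightarrow> real"
  assumes P: "prob_space M" and T: "finite T" and I: "\<And>t. t\<in>T \<Longrightarrow> integrable M (g t)"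
  shows "integrable M (\<lambda>y. (\<Sum>t\<in>T. C t * g t y) + D * (1 - (\<Sum>t\<in>T. K t * g t y)))"
proof -
  interpret prob_space M by fact
  show ?thesis using I by auto
qed

definition dS1' :: "complex \<Rightarrow> complex \<Rightarrow> real" where
  "dS1' z w = arccos (max (-1) (min 1 (Re (z * cnj w))))"

lemma Re_mult_cnj_bound:
  assumes "cmod z = 1" "cmod w = 1"
  shows "-1 \<le> Re (z * cnj w)" "Re (z * cnj w) \<le> 1"
proof -
  have "\<bar>Re (z * cnj w)\<bar> \<le> cmod (z * cnj w)" by (rule abs_Re_le_cmod)
  also have "\<dots> = 1" using assms by (simp add: norm_mult)
  finally show "-1 \<le> Re (z * cnj w)" "Re (z * cnj w) \<le> 1" by auto
qed

lemma dS1'_eq: "cmod z = 1 \<Longrightarrow> cmod w = 1 \<Longrightarrow> dS1' z w = dS1 z w"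
  using Re_mult_cnj_bound[of z w] by (simp add: dS1'_def dS1_def)

lemma dS1'_cont: "continuous_on UNIV (\<lambda>(z,w). dS1' z w)"
proof -
  have "continuous_on UNIV (\<lambda>x::complex\<times>complex. arccos (max (-1) (min 1 (Re (fst x * cnj (snd x))))))"
    by (rule continuous_on_arccos) (auto intro!: continuous_intros)
  then show ?thesis by (simp add: dS1'_def case_prod_beta)
qed

lemma dS1'_meas[measurable]: "(\<lambda>(z,w). dS1' z w) \<in> borel_measurable borel"
  using dS1'_cont by (rule borel_measurable_continuous_onI)

lemma dS1'_meas2[measurable]:
  fixes f g :: "'a \<Rightarrow> complex"
  assumes [measurable]: "f \<in> borel_measurable M" "g \<in> borel_measurable M"
  shows "(\<lambda>x. dS1' (f x) (g x)) \<in> borel_measurable M"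
proof -
  have "(\<lambda>x. (f x, g x)) \<in> borel_measurable M" by measurable
  from measurable_compose[OF this dS1'_meas] show ?thesis by simp
qed

lemma dS1_range: "cmod z = 1 \<Longrightarrow> cmod w = 1 \<Longrightarrow> 0 \<le> dS1 z w \<and> dS1 z w \<le> pi"
  using Re_mult_cnj_bound[of z w] by (simp add: dS1_def arccos_lbound arccos_ubound)


lemma coupling_bound:
  fixes M1 M2 :: "'a::euclidean_space measure" and f :: "'a \<Rightarrow> complex"
    and T :: "'t set" and \<phi> :: "'t \<Rightarrow> complex \<Rightarrow> real"
  assumes M1: "prob_space M1" "sets M1 = sets borel" and M2: "prob_space M2" "sets M2 = sets borel"
    and fm: "f \<in> borel_measurable borel" and f1: "\<And>x. cmod (f x) = 1"
    and T: "finite T"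
    and \<phi>c: "\<And>t. continuous_on UNIV (\<phi> t)"
    and \<phi>0: "\<And>t z. 0 \<le> \<phi> t z"
    and \<phi>sum: "\<And>z. cmod z = 1 \<Longrightarrow> (\<Sum>t\<in>T. \<phi> t z) = 1"
    and cost: "\<And>t z w. t\<in>T \<Longrightarrow> cmod z = 1 \<Longrightarrow> cmod w = 1 \<Longrightarrow> 0 < \<phi> t z \<Longrightarrow> 0 < \<phi> t w
                  \<Longrightarrow> dS1 z w powr p \<le> e"
    and p: "p > 0" and e: "0 \<le> e" and \<eta>: "0 < \<eta>" "\<eta> \<le> 1"
  shows "Wpp_S1 p (distr M1 borel f) (distr M2 borel f)
     \<le> ennreal (e + pi powr p * (\<eta> + (\<Sum>t\<in>T. \<bar>(\<integral>x. \<phi> t (f x) \<partial>M1) - (\<integral>x. \<phi> t (f x) \<partial>M2)\<bar>)))"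
proof -
  interpret P1: prob_space M1 by fact
  interpret P2: prob_space M2 by fact
  interpret P12: pair_sigma_finite M1 M2 by unfold_locales
  note [measurable_cong] = M1(2) M2(2)
  have \<phi>m[measurable]: "\<phi> t \<in> borel_measurable borel" for t using \<phi>c by (rule borel_measurable_continuous_onI)
  note fm[measurable]
  have \<phi>1: "\<phi> t z \<le> 1" if "t \<in> T" "cmod z = 1" for t z
  proof -
    have "\<phi> t z \<le> (\<Sum>t\<in>T. \<phi> t z)" using that T \<phi>0 by (intro member_le_sum) auto
    then show ?thesis using \<phi>sum[OF that(2)] by simp
  qed
  have intg: "integrable M (\<lambda>x. \<phi> t (f x))" if "t \<in> T" "prob_space M" "sets M = sets borel" for M t
  proof -
    interpret prob_space M by fact
    show ?thesis
      by (rule finite_measure.integrable_const_bound[where B=1])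
         (auto simp: \<phi>0 \<phi>1 f1 that measurable_cong_sets[OF that(3) refl])
  qed
  define a where "a t = (\<integral>x. \<phi> t (f x) \<partial>M1)" for t
  define b where "b t = (\<integral>x. \<phi> t (f x) \<partial>M2)" for t
  have a0: "0 \<le> a t" for t unfolding a_def by (rule integral_nonneg_AE) (simp add: \<phi>0)
  have b0: "0 \<le> b t" for t unfolding b_def by (rule integral_nonneg_AE) (simp add: \<phi>0)
  have suma: "(\<Sum>t\<in>T. a t) = 1"
  proof -
    have "(\<Sum>t\<in>T. a t) = (\<integral>x. (\<Sum>t\<in>T. \<phi> t (f x)) \<partial>M1)"
      unfolding a_def using intg[OF _ M1] by (simp add: Bochner_Integration.integral_sum)
    also have "\<dots> = (\<integral>x. 1 \<partial>M1)" by (simp add: \<phi>sum f1)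
    finally show ?thesis by (simp add: P1.prob_space)
  qed
  have sumb: "(\<Sum>t\<in>T. b t) = 1"
  proof -
    have "(\<Sum>t\<in>T. b t) = (\<integral>x. (\<Sum>t\<in>T. \<phi> t (f x)) \<partial>M2)"
      unfolding b_def using intg[OF _ M2] by (simp add: Bochner_Integration.integral_sum)
    also have "\<dots> = (\<integral>x. 1 \<partial>M2)" by (simp add: \<phi>sum f1)
    finally show ?thesis by (simp add: P2.prob_space)
  qed
  define m where "m t = (1 - \<eta>) * min (a t) (b t)" for t
  have m0: "0 \<le> m t" for t using a0 b0 \<eta> by (simp add: m_def)
  have ma: "m t \<le> a t" and mb: "m t \<le> b t" for t
    using a0[of t] b0[of t] \<eta> unfolding m_def
    by (smt (verit) mult_left_le_one_le min.cobounded1 min.cobounded2 min_def)+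
  have maa: "m t / a t * a t = m t" for t using m0[of t] ma[of t] by (cases "a t = 0") auto
  have mbb: "m t / b t * b t = m t" for t using m0[of t] mb[of t] by (cases "b t = 0") auto
  have mab: "m t / (a t * b t) * b t = m t / a t" "m t / (a t * b t) * a t = m t / b t" for t
    using m0[of t] ma[of t] mb[of t] by (cases "a t = 0"; cases "b t = 0"; simp)+
  define r where "r = 1 - (\<Sum>t\<in>T. m t)"
  have r\<eta>: "\<eta> \<le> r"
  proof -
    have "(\<Sum>t\<in>T. m t) \<le> (\<Sum>t\<in>T. (1 - \<eta>) * b t)"
      using b0 \<eta> by (intro sum_mono) (simp add: m_def mult_left_mono)
    also have "\<dots> = 1 - \<eta>" by (simp add: sum_distrib_left[symmetric] sumb)
    finally show ?thesis by (simp add: r_def)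
  qed
  have r0: "0 < r" using r\<eta> \<eta> by simp
  have rle: "r \<le> \<eta> + (\<Sum>t\<in>T. \<bar>a t - b t\<bar>)"
  proof -
    have "(\<Sum>t\<in>T. b t - \<bar>a t - b t\<bar>) \<le> (\<Sum>t\<in>T. min (a t) (b t))"
      by (intro sum_mono) auto
    then have "1 - (\<Sum>t\<in>T. \<bar>a t - b t\<bar>) \<le> (\<Sum>t\<in>T. min (a t) (b t))"
      by (simp add: sum_subtractf sumb)
    then have "(1 - \<eta>) * (1 - (\<Sum>t\<in>T. \<bar>a t - b t\<bar>)) \<le> (1 - \<eta>) * (\<Sum>t\<in>T. min (a t) (b t))"
      using \<eta> by (intro mult_left_mono) auto
    moreover have "(\<Sum>t\<in>T. m t) = (1 - \<eta>) * (\<Sum>t\<in>T. min (a t) (b t))"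
      by (simp add: m_def sum_distrib_left)
    moreover have "0 \<le> \<eta> * (\<Sum>t\<in>T. \<bar>a t - b t\<bar>)" using \<eta> by (simp add: sum_nonneg)
    moreover have "(1 - \<eta>) * (1 - (\<Sum>t\<in>T. \<bar>a t - b t\<bar>)) = 1 - \<eta> - (\<Sum>t\<in>T. \<bar>a t - b t\<bar>) + \<eta> * (\<Sum>t\<in>T. \<bar>a t - b t\<bar>)"
      by (simp add: algebra_simps)
    ultimately show ?thesis unfolding r_def by linarith
  qed
  define F where "F z = 1 - (\<Sum>t\<in>T. m t / a t * \<phi> t z)" for z
  define G where "G z = 1 - (\<Sum>t\<in>T. m t / b t * \<phi> t z)" for z
  have F0: "0 \<le> F z" if "cmod z = 1" for z
  proof -
    have "(\<Sum>t\<in>T. m t / a t * \<phi> t z) \<le> (\<Sum>t\<in>T. \<phi> t z)"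
    proof (intro sum_mono)
      fix t have "m t / a t \<le> 1" using m0[of t] ma[of t] a0[of t]
        by (cases "a t = 0") (auto simp: divide_le_eq_1)
      from mult_right_mono[OF this \<phi>0[of t z]] show "m t / a t * \<phi> t z \<le> \<phi> t z" by simp
    qed
    then show ?thesis using \<phi>sum[OF that] by (simp add: F_def)
  qed
  have G0: "0 \<le> G z" if "cmod z = 1" for z
  proof -
    have "(\<Sum>t\<in>T. m t / b t * \<phi> t z) \<le> (\<Sum>t\<in>T. \<phi> t z)"
    proof (intro sum_mono)
      fix t have "m t / b t \<le> 1" using m0[of t] mb[of t] b0[of t]
        by (cases "b t = 0") (auto simp: divide_le_eq_1)
      from mult_right_mono[OF this \<phi>0[of t z]] show "m t / b t * \<phi> t z \<le> \<phi> t z" by simp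
    qed
    then show ?thesis using \<phi>sum[OF that] by (simp add: G_def)
  qed
  define h where "h z w = (\<Sum>t\<in>T. m t / (a t * b t) * \<phi> t z * \<phi> t w) + F z * G w / r" for z w
  have h0: "0 \<le> h z w" if "cmod z = 1" "cmod w = 1" for z w
    unfolding h_def using F0[OF that(1)] G0[OF that(2)] r0 m0 a0 b0 \<phi>0
    by (intro add_nonneg_nonneg sum_nonneg divide_nonneg_nonneg mult_nonneg_nonneg) auto
  have intg1: "integrable M1 (\<lambda>x. \<phi> t (f x))" if "t\<in>T" for t using intg[OF that M1] .
  have intg2: "integrable M2 (\<lambda>x. \<phi> t (f x))" if "t\<in>T" for t using intg[OF that M2] .
  have hform1: "h z w = (\<Sum>t\<in>T. (m t / (a t * b t) * \<phi> t z) * \<phi> t w) + (F z / r) * (1 - (\<Sum>t\<in>T. (m t / b t) * \<phi> t w))" for z w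
    by (simp add: h_def G_def mult_ac)
  have hform2: "h z w = (\<Sum>t\<in>T. (m t / (a t * b t) * \<phi> t w) * \<phi> t z) + (G w / r) * (1 - (\<Sum>t\<in>T. (m t / a t) * \<phi> t z))" for z w
    by (simp add: h_def F_def mult_ac)
  have inner1: "(\<integral>\<^sup>+y. ennreal (h z (f y)) \<partial>M2) = 1" if z: "cmod z = 1" for z
  proof -
    have I: "integrable M2 (\<lambda>y. h z (f y))"
      unfolding hform1 by (rule int_lin_integrable[OF M2(1) T intg2])
    have "(\<integral>y. h z (f y) \<partial>M2) = (\<Sum>t\<in>T. (m t / (a t * b t) * \<phi> t z) * b t) + (F z / r) * (1 - (\<Sum>t\<in>T. (m t / b t) * b t))"
      unfolding hform1 b_def by (rule int_lin[OF M2(1) T intg2])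
    also have "\<dots> = 1"
    proof -
      have e1: "(m t / (a t * b t) * \<phi> t z) * b t = m t / a t * \<phi> t z" for t
        by (subst mab(1)[symmetric]) (simp only: mult_ac)
      have "(\<Sum>t\<in>T. (m t / b t) * b t) = (\<Sum>t\<in>T. m t)" by (rule sum.cong[OF refl]) (rule mbb)
      moreover have "(\<Sum>t\<in>T. (m t / (a t * b t) * \<phi> t z) * b t) = (\<Sum>t\<in>T. m t / a t * \<phi> t z)"
        by (rule sum.cong[OF refl]) (rule e1)
      ultimately show ?thesis using r0 unfolding r_def[symmetric] by (simp only:) (simp add: F_def r_def[symmetric])
    qed
    finally show ?thesis using I z f1 h0 by (subst nn_integral_eq_integral) auto
  qed
  have inner2: "(\<integral>\<^sup>+x. ennreal (h (f x) w) \<partial>M1) = 1" if w: "cmod w = 1" for w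
  proof -
    have I: "integrable M1 (\<lambda>x. h (f x) w)"
      unfolding hform2 by (rule int_lin_integrable[OF M1(1) T intg1])
    have "(\<integral>x. h (f x) w \<partial>M1) = (\<Sum>t\<in>T. (m t / (a t * b t) * \<phi> t w) * a t) + (G w / r) * (1 - (\<Sum>t\<in>T. (m t / a t) * a t))"
      unfolding hform2 a_def by (rule int_lin[OF M1(1) T intg1])
    also have "\<dots> = 1"
    proof -
      have e1: "(m t / (a t * b t) * \<phi> t w) * a t = m t / b t * \<phi> t w" for t
        by (subst mab(2)[symmetric]) (simp only: mult_ac)
      have "(\<Sum>t\<in>T. (m t / a t) * a t) = (\<Sum>t\<in>T. m t)" by (rule sum.cong[OF refl]) (rule maa)
      moreover have "(\<Sum>t\<in>T. (m t / (a t * b t) * \<phi> t w) * a t) = (\<Sum>t\<in>T. m t / b t * \<phi> t w)"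
        by (rule sum.cong[OF refl]) (rule e1)
      ultimately show ?thesis using r0 unfolding r_def[symmetric] by (simp only:) (simp add: G_def r_def[symmetric])
    qed
    finally show ?thesis using I w f1 h0 by (subst nn_integral_eq_integral) auto
  qed
  have hm1[measurable]: "(\<lambda>y. h z (f y)) \<in> borel_measurable M2" for z
    unfolding h_def F_def G_def by measurable
  have hm2[measurable]: "(\<lambda>x. h (f x) w) \<in> borel_measurable M1" for w
    unfolding h_def F_def G_def by measurable
  define H where "H xy = ennreal (h (f (fst xy)) (f (snd xy)))" for xy
  have Hm[measurable]: "H \<in> borel_measurable (M1 \<Otimes>\<^sub>M M2)"
    unfolding H_def h_def F_def G_def by measurable
  define D where "D = density (M1 \<Otimes>\<^sub>M M2) H"
  define \<Phi> where "\<Phi> xy = (f (fst xy), f (snd xy))" for xy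
  have \<Phi>m[measurable]: "\<Phi> \<in> D \<rightarrow>\<^sub>M borel" unfolding \<Phi>_def D_def by measurable
  define \<gamma> where "\<gamma> = distr D borel \<Phi>"
  have spD: "space D = UNIV"
    by (simp add: D_def space_pair_measure sets_eq_imp_space_eq[OF M1(2)] sets_eq_imp_space_eq[OF M2(2)])
  have marg1: "distr \<gamma> borel fst = distr M1 borel f"
  proof (rule measure_eqI)
    show "sets (distr \<gamma> borel fst) = sets (distr M1 borel f)" by simp
    fix A assume "A \<in> sets (distr \<gamma> borel fst)"
    then have A[measurable]: "A \<in> sets borel" by simp
    have "distr \<gamma> borel fst = distr D borel (fst \<circ> \<Phi>)" unfolding \<gamma>_def
      by (rule distr_distr) (auto intro!: borel_measurable_continuous_onI continuous_intros)
    moreover have "fst \<circ> \<Phi> \<in> D \<rightarrow>\<^sub>M borel" unfolding comp_def \<Phi>_def D_def by measurable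
    ultimately have "emeasure (distr \<gamma> borel fst) A = emeasure D ((fst \<circ> \<Phi>) -` A \<inter> space D)"
      by (simp add: emeasure_distr)
    also have "\<dots> = (\<integral>\<^sup>+xy. H xy * indicator A (f (fst xy)) \<partial>(M1 \<Otimes>\<^sub>M M2))"
      unfolding D_def by (subst emeasure_density) (auto simp: spD \<Phi>_def vimage_def D_def intro!: nn_integral_cong split: split_indicator)
    also have "\<dots> = (\<integral>\<^sup>+x. \<integral>\<^sup>+y. H (x,y) * indicator A (f x) \<partial>M2 \<partial>M1)"
    proof -
      have mm: "(\<lambda>xy. H xy * indicator A (f (fst xy))) \<in> borel_measurable (M1 \<Otimes>\<^sub>M M2)" by measurable
      show ?thesis using sigma_finite_measure.nn_integral_fst[OF P2.sigma_finite_measure_axioms mm] by simp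
    qed
    also have "\<dots> = (\<integral>\<^sup>+x. indicator A (f x) \<partial>M1)"
    proof (rule nn_integral_cong)
      fix x
      have "(\<integral>\<^sup>+y. H (x,y) * indicator A (f x) \<partial>M2) = (\<integral>\<^sup>+y. ennreal (h (f x) (f y)) \<partial>M2) * indicator A (f x)"
        by (subst nn_integral_multc[symmetric]) (auto simp: H_def hm1 hm2 split: split_indicator intro!: nn_integral_cong)
      then show "(\<integral>\<^sup>+y. H (x,y) * indicator A (f x) \<partial>M2) = indicator A (f x)"
        using inner1[OF f1[of x]] by simp
    qed
    also have "\<dots> = (\<integral>\<^sup>+z. indicator A z \<partial>distr M1 borel f)"
      by (subst nn_integral_distr) auto
    also have "\<dots> = emeasure (distr M1 borel f) A" by simp
    finally show "emeasure (distr \<gamma> borel fst) A = emeasure (distr M1 borel f) A" .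
  qed
  have marg2: "distr \<gamma> borel snd = distr M2 borel f"
  proof (rule measure_eqI)
    show "sets (distr \<gamma> borel snd) = sets (distr M2 borel f)" by simp
    fix A assume "A \<in> sets (distr \<gamma> borel snd)"
    then have A[measurable]: "A \<in> sets borel" by simp
    have "distr \<gamma> borel snd = distr D borel (snd \<circ> \<Phi>)" unfolding \<gamma>_def
      by (rule distr_distr) (auto intro!: borel_measurable_continuous_onI continuous_intros)
    moreover have "snd \<circ> \<Phi> \<in> D \<rightarrow>\<^sub>M borel" unfolding comp_def \<Phi>_def D_def by measurable
    ultimately have "emeasure (distr \<gamma> borel snd) A = emeasure D ((snd \<circ> \<Phi>) -` A \<inter> space D)"
      by (simp add: emeasure_distr)
    also have "\<dots> = (\<integral>\<^sup>+xy. H xy * indicator A (f (snd xy)) \<partial>(M1 \<Otimes>\<^sub>M M2))"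
      unfolding D_def by (subst emeasure_density) (auto simp: spD \<Phi>_def vimage_def D_def intro!: nn_integral_cong split: split_indicator)
    also have "\<dots> = (\<integral>\<^sup>+y. \<integral>\<^sup>+x. H (x,y) * indicator A (f y) \<partial>M1 \<partial>M2)"
    proof -
      have mm: "(\<lambda>xy. H xy * indicator A (f (snd xy))) \<in> borel_measurable (M1 \<Otimes>\<^sub>M M2)" by measurable
      show ?thesis using pair_sigma_finite.nn_integral_snd[OF P12.pair_sigma_finite_axioms mm] by simp
    qed
    also have "\<dots> = (\<integral>\<^sup>+y. indicator A (f y) \<partial>M2)"
    proof (rule nn_integral_cong)
      fix y
      have "(\<integral>\<^sup>+x. H (x,y) * indicator A (f y) \<partial>M1) = (\<integral>\<^sup>+x. ennreal (h (f x) (f y)) \<partial>M1) * indicator A (f y)"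
        by (subst nn_integral_multc[symmetric]) (auto simp: H_def hm1 hm2 split: split_indicator intro!: nn_integral_cong)
      then show "(\<integral>\<^sup>+x. H (x,y) * indicator A (f y) \<partial>M1) = indicator A (f y)"
        using inner2[OF f1[of y]] by simp
    qed
    also have "\<dots> = (\<integral>\<^sup>+z. indicator A z \<partial>distr M2 borel f)"
      by (subst nn_integral_distr) auto
    also have "\<dots> = emeasure (distr M2 borel f) A" by simp
    finally show "emeasure (distr \<gamma> borel snd) A = emeasure (distr M2 borel f) A" .
  qed
  have fst\<gamma>: "fst \<in> \<gamma> \<rightarrow>\<^sub>M borel" unfolding \<gamma>_def measurable_distr_eq1
    by (auto intro!: borel_measurable_continuous_onI continuous_intros)
  have prob: "prob_space \<gamma>"
  proof (rule prob_spaceI)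
    have "emeasure \<gamma> (space \<gamma>) = emeasure (distr \<gamma> borel fst) UNIV"
      using fst\<gamma> by (subst emeasure_distr) auto
    also have "\<dots> = emeasure (distr M1 borel f) UNIV" by (simp add: marg1)
    also have "\<dots> = emeasure M1 (space M1)"
      by (subst emeasure_distr) (auto simp: sets_eq_imp_space_eq[OF M1(2)] M1(2))
    finally show "emeasure \<gamma> (space \<gamma>) = 1" by (simp add: P1.emeasure_space_1)
  qed
  have coup: "\<gamma> \<in> couplings (distr M1 borel f) (distr M2 borel f)"
    unfolding couplings_def using prob marg1 marg2 by (simp add: \<gamma>_def)
  define k where "k x y = e * (\<Sum>t\<in>T. m t / (a t * b t) * \<phi> t (f x) * \<phi> t (f y)) + pi powr p * (F (f x) / r) * G (f y)" for x y
  have pt: "H (x,y) * ennreal (dS1' (f x) (f y) powr p) \<le> ennreal (k x y)" for x y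
  proof -
    define z where "z = f x"
    define w where "w = f y"
    have z1: "cmod z = 1" and w1: "cmod w = 1" by (simp_all add: z_def w_def f1)
    define d where "d = dS1 z w powr p"
    have d0: "0 \<le> d" by (simp add: d_def)
    have dpi: "d \<le> pi powr p" unfolding d_def using dS1_range[OF z1 w1] p
      by (intro powr_mono2) auto
    have trm: "m t / (a t * b t) * \<phi> t z * \<phi> t w * d \<le> e * (m t / (a t * b t) * \<phi> t z * \<phi> t w)" if t: "t \<in> T" for t
    proof (cases "0 < \<phi> t z \<and> 0 < \<phi> t w")
      case True
      then have "d \<le> e" unfolding d_def using cost[OF t z1 w1] by auto
      moreover have "0 \<le> m t / (a t * b t) * \<phi> t z * \<phi> t w" using m0 a0 b0 \<phi>0 by simp
      ultimately show ?thesis by (metis mult.commute mult_right_mono)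
    next
      case False
      then have "\<phi> t z = 0 \<or> \<phi> t w = 0" using \<phi>0[of t z] \<phi>0[of t w] by auto
      then show ?thesis by auto
    qed
    have "h z w * d = (\<Sum>t\<in>T. m t / (a t * b t) * \<phi> t z * \<phi> t w * d) + F z * G w / r * d"
      by (simp add: h_def sum_distrib_right distrib_right)
    also have "\<dots> \<le> (\<Sum>t\<in>T. e * (m t / (a t * b t) * \<phi> t z * \<phi> t w)) + F z * G w / r * pi powr p"
      using trm F0[OF z1] G0[OF w1] r0 dpi by (intro add_mono sum_mono mult_left_mono) auto
    also have "\<dots> = k x y" by (simp add: k_def z_def w_def sum_distrib_left mult_ac)
    finally have "h z w * d \<le> k x y" .
    then show ?thesis using h0[OF z1 w1] d0
      by (simp add: H_def z_def w_def d_def dS1'_eq[OF f1 f1] ennreal_mult''[symmetric] ennreal_leI)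
  qed
  have km[measurable]: "(\<lambda>xy. k (fst xy) (snd xy)) \<in> borel_measurable (M1 \<Otimes>\<^sub>M M2)"
    unfolding k_def F_def G_def by measurable
  have k0: "0 \<le> k x y" for x y
    unfolding k_def using F0[OF f1] G0[OF f1] r0 m0 a0 b0 \<phi>0 e
    by (intro add_nonneg_nonneg sum_nonneg divide_nonneg_nonneg mult_nonneg_nonneg) auto
  have kin: "(\<integral>\<^sup>+y. ennreal (k x y) \<partial>M2) = ennreal (e * (\<Sum>t\<in>T. m t / a t * \<phi> t (f x)) + pi powr p * F (f x))" for x
  proof -
    have kf: "k x y = (\<Sum>t\<in>T. (e * (m t / (a t * b t)) * \<phi> t (f x)) * \<phi> t (f y)) + (pi powr p * F (f x) / r) * (1 - (\<Sum>t\<in>T. (m t / b t) * \<phi> t (f y)))" for y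
      by (simp add: k_def G_def sum_distrib_left mult_ac)
    have I: "integrable M2 (\<lambda>y. k x y)"
      unfolding kf by (rule int_lin_integrable[OF M2(1) T intg2])
    have "(\<integral>y. k x y \<partial>M2) = (\<Sum>t\<in>T. (e * (m t / (a t * b t)) * \<phi> t (f x)) * b t) + (pi powr p * F (f x) / r) * (1 - (\<Sum>t\<in>T. (m t / b t) * b t))"
      unfolding kf unfolding b_def by (rule int_lin[OF M2(1) T intg2])
    also have "\<dots> = e * (\<Sum>t\<in>T. m t / a t * \<phi> t (f x)) + pi powr p * F (f x)"
    proof -
      have e1: "(e * (m t / (a t * b t)) * \<phi> t (f x)) * b t = e * (m t / a t * \<phi> t (f x))" for t
        by (subst mab(1)[symmetric]) (simp only: mult_ac)
      have "(\<Sum>t\<in>T. (m t / b t) * b t) = (\<Sum>t\<in>T. m t)" by (rule sum.cong[OF refl]) (rule mbb)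
      moreover have "(\<Sum>t\<in>T. (e * (m t / (a t * b t)) * \<phi> t (f x)) * b t) = (\<Sum>t\<in>T. e * (m t / a t * \<phi> t (f x)))"
        by (rule sum.cong[OF refl]) (rule e1)
      ultimately show ?thesis using r0 unfolding r_def[symmetric] by (simp only:) (simp add: sum_distrib_left r_def[symmetric])
    qed
    finally show ?thesis using I k0 by (subst nn_integral_eq_integral) auto
  qed
  have kout: "(\<integral>\<^sup>+x. ennreal (e * (\<Sum>t\<in>T. m t / a t * \<phi> t (f x)) + pi powr p * F (f x)) \<partial>M1) = ennreal (e * (\<Sum>t\<in>T. m t) + pi powr p * r)"
  proof -
    have kf: "e * (\<Sum>t\<in>T. m t / a t * \<phi> t (f x)) + pi powr p * F (f x) = (\<Sum>t\<in>T. (e * (m t / a t)) * \<phi> t (f x)) + pi powr p * (1 - (\<Sum>t\<in>T. (m t / a t) * \<phi> t (f x)))" for x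
      by (simp add: F_def sum_distrib_left mult_ac)
    have I: "integrable M1 (\<lambda>x. e * (\<Sum>t\<in>T. m t / a t * \<phi> t (f x)) + pi powr p * F (f x))"
      unfolding kf by (rule int_lin_integrable[OF M1(1) T intg1])
    have "(\<integral>x. e * (\<Sum>t\<in>T. m t / a t * \<phi> t (f x)) + pi powr p * F (f x) \<partial>M1) = (\<Sum>t\<in>T. (e * (m t / a t)) * a t) + pi powr p * (1 - (\<Sum>t\<in>T. (m t / a t) * a t))"
      unfolding kf unfolding a_def by (rule int_lin[OF M1(1) T intg1])
    also have "\<dots> = e * (\<Sum>t\<in>T. m t) + pi powr p * r"
    proof -
      have "(\<Sum>t\<in>T. (m t / a t) * a t) = (\<Sum>t\<in>T. m t)" by (rule sum.cong[OF refl]) (rule maa)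
      moreover have "(\<Sum>t\<in>T. (e * (m t / a t)) * a t) = (\<Sum>t\<in>T. e * m t)"
        by (rule sum.cong[OF refl]) (simp only: mult.assoc maa)
      moreover have "(\<Sum>t\<in>T. e * m t) = e * (\<Sum>t\<in>T. m t)" by (simp add: sum_distrib_left)
      ultimately show ?thesis unfolding r_def by (simp only:)
    qed
    moreover have "0 \<le> e * (\<Sum>t\<in>T. m t / a t * \<phi> t (f x)) + pi powr p * F (f x)" for x
      using F0[OF f1[of x]] m0 a0 \<phi>0 e
      by (intro add_nonneg_nonneg mult_nonneg_nonneg sum_nonneg divide_nonneg_nonneg) auto
    ultimately show ?thesis using I by (subst nn_integral_eq_integral) auto
  qed
  have AEc: "AE z in \<gamma>. cmod (fst z) = 1 \<and> cmod (snd z) = 1"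
  proof -
    have "closed {x::complex\<times>complex. cmod (fst x) = 1 \<and> cmod (snd x) = 1}"
      by (intro closed_Collect_conj closed_Collect_eq continuous_intros)
    then have "{x::complex\<times>complex. cmod (fst x) = 1 \<and> cmod (snd x) = 1} \<in> sets borel" by (rule borel_closed)
    then show ?thesis unfolding \<gamma>_def by (subst AE_distr_iff) (auto simp: \<Phi>_def f1)
  qed
  have "(\<integral>\<^sup>+ z. ennreal (dS1 (fst z) (snd z) powr p) \<partial>\<gamma>) \<le> (\<integral>\<^sup>+ z. ennreal (dS1' (fst z) (snd z) powr p) \<partial>\<gamma>)"
    by (rule nn_integral_mono_AE) (use AEc in \<open>auto simp: dS1'_eq\<close>)
  also have "\<dots> = (\<integral>\<^sup>+ xy. ennreal (dS1' (f (fst xy)) (f (snd xy)) powr p) \<partial>D)"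
  proof -
    have dm: "(\<lambda>z. dS1' (fst z) (snd z) powr p) \<in> borel_measurable (borel :: (complex \<times> complex) measure)"
      by (subst borel_prod[symmetric]) measurable
    show ?thesis unfolding \<gamma>_def using dm by (subst nn_integral_distr) (auto simp: \<Phi>_def)
  qed
  also have "\<dots> = (\<integral>\<^sup>+ xy. H xy * ennreal (dS1' (f (fst xy)) (f (snd xy)) powr p) \<partial>(M1 \<Otimes>\<^sub>M M2))"
    unfolding D_def by (subst nn_integral_density) auto
  also have "\<dots> \<le> (\<integral>\<^sup>+ xy. ennreal (k (fst xy) (snd xy)) \<partial>(M1 \<Otimes>\<^sub>M M2))"
    using pt by (intro nn_integral_mono) (auto simp: case_prod_beta)
  also have "\<dots> = (\<integral>\<^sup>+x. \<integral>\<^sup>+y. ennreal (k x y) \<partial>M2 \<partial>M1)"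
  proof -
    have mm: "(\<lambda>xy. ennreal (k (fst xy) (snd xy))) \<in> borel_measurable (M1 \<Otimes>\<^sub>M M2)" by measurable
    show ?thesis using sigma_finite_measure.nn_integral_fst[OF P2.sigma_finite_measure_axioms mm] by simp
  qed
  also have "\<dots> = ennreal (e * (\<Sum>t\<in>T. m t) + pi powr p * r)" by (simp only: kin kout)
  also have "\<dots> \<le> ennreal (e + pi powr p * (\<eta> + (\<Sum>t\<in>T. \<bar>a t - b t\<bar>)))"
  proof (rule ennreal_leI)
    have "(\<Sum>t\<in>T. m t) \<le> 1" using r0 by (simp add: r_def)
    then have "e * (\<Sum>t\<in>T. m t) \<le> e" using e by (simp add: mult_left_le)
    moreover have "pi powr p * r \<le> pi powr p * (\<eta> + (\<Sum>t\<in>T. \<bar>a t - b t\<bar>))"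
      using rle by (intro mult_left_mono) auto
    ultimately show "e * (\<Sum>t\<in>T. m t) + pi powr p * r \<le> e + pi powr p * (\<eta> + (\<Sum>t\<in>T. \<bar>a t - b t\<bar>))" by linarith
  qed
  finally have costb: "(\<integral>\<^sup>+ z. ennreal (dS1 (fst z) (snd z) powr p) \<partial>\<gamma>) \<le> ennreal (e + pi powr p * (\<eta> + (\<Sum>t\<in>T. \<bar>a t - b t\<bar>)))" .
  have "Wpp_S1 p (distr M1 borel f) (distr M2 borel f) \<le> (\<integral>\<^sup>+ z. ennreal (dS1 (fst z) (snd z) powr p) \<partial>\<gamma>)"
    unfolding Wpp_S1_def by (rule INF_lower[OF coup])
  with costb show ?thesis by (simp add: a_def b_def)
qed



lemma projU_cont: "continuous_on UNIV (\<lambda>Ux::('a::euclidean_space \<times> 'a) \<times> 'a. projU (fst Ux) (snd Ux))"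
  unfolding projU_def Complex_eq by (intro continuous_intros)

lemma projU_cont1: "continuous_on UNIV (\<lambda>x::'a::euclidean_space. projU U x)"
  unfolding projU_def Complex_eq by (intro continuous_intros)

lemma PU_meas_joint: "(\<lambda>Ux::('a::euclidean_space \<times> 'a) \<times> 'a. PU (fst Ux) (snd Ux)) \<in> borel_measurable borel"
proof -
  have pm[measurable]: "(\<lambda>Ux::('a \<times> 'a) \<times> 'a. projU (fst Ux) (snd Ux)) \<in> borel_measurable borel"
    by (rule borel_measurable_continuous_onI[OF projU_cont])
  show ?thesis unfolding PU_def by measurable
qed

lemma PU_meas: "PU U \<in> borel_measurable (borel :: 'a::euclidean_space measure)"
proof -
  have pm[measurable]: "projU U \<in> borel_measurable (borel :: 'a measure)"
    by (rule borel_measurable_continuous_onI[OF projU_cont1])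
  show ?thesis unfolding PU_def by measurable
qed

lemma PU_norm: "cmod (PU U x) = 1"
  by (simp add: PU_def norm_divide)


lemma conv_U:
  fixes \<mu>s :: "nat \<Rightarrow> 'a::euclidean_space measure" and \<mu> :: "'a measure" and \<phi> :: "complex \<Rightarrow> real"
  assumes Pk: "\<And>k. prob_space (\<mu>s k)" "\<And>k. sets (\<mu>s k) = sets borel"
    and P: "prob_space \<mu>" "sets \<mu> = sets borel"
    and wc: "weak_conv_sph \<mu>s \<mu>"
    and null: "emeasure \<mu> {x. projU U x = 0} = 0"
    and \<phi>c: "continuous_on UNIV \<phi>" and \<phi>0: "\<And>z. 0 \<le> \<phi> z" and \<phi>1: "\<And>z. \<phi> z \<le> 1"
  shows "(\<lambda>k. \<integral>x. \<phi> (PU U x) \<partial>\<mu>s k) \<longlonglongrightarrow> (\<integral>x. \<phi> (PU U x) \<partial>\<mu>)"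
proof -
  interpret P: prob_space \<mu> by fact
  define Pr where "Pr = projU U"
  have Prc: "continuous_on UNIV Pr" unfolding Pr_def by (rule projU_cont1)
  have Prm[measurable]: "Pr \<in> borel_measurable borel" by (rule borel_measurable_continuous_onI[OF Prc])
  have \<phi>m[measurable]: "\<phi> \<in> borel_measurable borel" by (rule borel_measurable_continuous_onI[OF \<phi>c])
  have PUm[measurable]: "PU U \<in> borel_measurable borel" by (rule PU_meas)
  define dl where "dl n = 1 / (real n + 1)" for n :: nat
  have dl0: "0 < dl n" for n by (simp add: dl_def)
  define g where "g n x = \<phi> (Pr x / complex_of_real (max (cmod (Pr x)) (dl n)))" for n x
  define h where "h n x = max 0 (min 1 (2 - cmod (Pr x) / dl n))" for n x
  have gc: "continuous_on UNIV (g n)" for n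
  proof -
    have nz: "\<forall>x\<in>UNIV. complex_of_real (max (cmod (Pr x)) (dl n)) \<noteq> 0" using dl0[of n]
      by (metis less_max_iff_disj of_real_eq_0_iff order_less_irrefl)
    have "continuous_on UNIV (\<lambda>x. Pr x / complex_of_real (max (cmod (Pr x)) (dl n)))"
      by (intro continuous_on_divide continuous_intros Prc nz)
    then show ?thesis unfolding g_def by (rule continuous_on_compose2[OF \<phi>c]) auto
  qed
  have hc: "continuous_on UNIV (h n)" for n unfolding h_def using dl0[of n] by (intro continuous_intros Prc) auto
  have gb: "bounded (range (g n))" for n
    unfolding bounded_iff using \<phi>0 \<phi>1 by (intro exI[of _ 1]) (auto simp: g_def abs_le_iff intro: order_trans[OF _ \<phi>0])
  have hb: "bounded (range (h n))" for n
    unfolding bounded_iff by (intro exI[of _ 1]) (auto simp: h_def)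
  have h01: "0 \<le> h n x" "h n x \<le> 1" for n x by (auto simp: h_def)
  have diff: "\<bar>\<phi> (PU U x) - g n x\<bar> \<le> h n x" for n x
  proof (cases "cmod (Pr x) \<ge> dl n")
    case True
    then have "Pr x \<noteq> 0" using dl0[of n] by auto
    then have "g n x = \<phi> (PU U x)" using True by (simp add: g_def PU_def Pr_def max_def)
    then show ?thesis using h01 by simp
  next
    case False
    then have "h n x = 1" using dl0[of n] by (simp add: h_def field_simps)
    moreover have "\<bar>\<phi> (PU U x) - g n x\<bar> \<le> 1" using \<phi>0 \<phi>1 by (simp add: g_def abs_le_iff) (smt (verit) \<phi>0 \<phi>1)
    ultimately show ?thesis by simp
  qed
  have gm[measurable]: "g n \<in> borel_measurable borel" for n by (rule borel_measurable_continuous_onI[OF gc])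
  have hm[measurable]: "h n \<in> borel_measurable borel" for n by (rule borel_measurable_continuous_onI[OF hc])
  have intb: "integrable M f" if "prob_space M" "sets M = sets borel" "f \<in> borel_measurable borel" "\<And>x. \<bar>f x\<bar> \<le> 1"
    for M and f :: "'a \<Rightarrow> real"
  proof -
    interpret prob_space M by fact
    show ?thesis
      by (rule finite_measure.integrable_const_bound[where B=1])
         (auto simp: that measurable_cong_sets[OF that(2) refl])
  qed
  have gabs: "\<bar>g n x\<bar> \<le> 1" for n x using \<phi>0 \<phi>1 by (simp add: g_def abs_le_iff)
  have fabs: "\<bar>\<phi> (PU U x)\<bar> \<le> 1" for x using \<phi>0[of "PU U x"] \<phi>1[of "PU U x"] by simp
  have habs: "\<bar>h n x\<bar> \<le> 1" for n x using h01[of n x] by simp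
  have est: "\<bar>(\<integral>x. \<phi> (PU U x) \<partial>M) - (\<integral>x. g n x \<partial>M)\<bar> \<le> (\<integral>x. h n x \<partial>M)"
    if M: "prob_space M" "sets M = sets borel" for M n
  proof -
    have i1: "integrable M (\<lambda>x. \<phi> (PU U x))" by (rule intb[OF M]) (auto simp: fabs)
    have i2: "integrable M (g n)" by (rule intb[OF M]) (auto simp: gabs)
    have i3: "integrable M (h n)" by (rule intb[OF M]) (auto simp: habs)
    have "(\<integral>x. \<phi> (PU U x) \<partial>M) - (\<integral>x. g n x \<partial>M) = (\<integral>x. \<phi> (PU U x) - g n x \<partial>M)"
      using i1 i2 by simp
    also have "\<bar>\<dots>\<bar> \<le> (\<integral>x. h n x \<partial>M)"
      using i1 i2 i3 diff by (intro integral_abs_bound_integral) auto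
    finally show ?thesis .
  qed
  have Nnull: "{x. Pr x = 0} \<in> null_sets \<mu>"
  proof -
    have "{x. Pr x = 0} \<in> sets borel" by measurable
    then show ?thesis using null P(2) by (simp add: null_sets_def Pr_def)
  qed
  have AEnz: "AE x in \<mu>. Pr x \<noteq> 0" by (rule AE_I'[OF Nnull]) auto
  have hlim: "(\<lambda>n. \<integral>x. h n x \<partial>\<mu>) \<longlonglongrightarrow> (\<integral>x. 0 \<partial>\<mu>)"
  proof (rule integral_dominated_convergence[where w="\<lambda>_. 1"])
    show "(\<lambda>x. 0::real) \<in> borel_measurable \<mu>" by simp
    show "h n \<in> borel_measurable \<mu>" for n by (subst measurable_cong_sets[OF P(2) refl]) (rule hm)
    show "integrable \<mu> (\<lambda>_. 1::real)" by simp
    show "AE x in \<mu>. norm (h n x) \<le> 1" for n using habs by simp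
    show "AE x in \<mu>. (\<lambda>n. h n x) \<longlonglongrightarrow> 0" using AEnz
    proof eventually_elim
      fix x assume x: "Pr x \<noteq> 0"
      define c where "c = cmod (Pr x)"
      have c: "0 < c" using x by (simp add: c_def)
      have "eventually (\<lambda>n. h n x = 0) sequentially"
        unfolding eventually_sequentially
      proof (intro exI[of _ "nat \<lceil>2 / c\<rceil>"] allI impI)
        fix n assume n: "nat \<lceil>2 / c\<rceil> \<le> n"
        then have "2 / c \<le> real n" by linarith
        then have "2 \<le> real n * c" using c by (simp add: divide_le_eq)
        then have "2 \<le> c / dl n" using c by (simp add: dl_def field_simps)
        then show "h n x = 0" by (simp add: h_def c_def)
      qed
      then show "(\<lambda>n. h n x) \<longlonglongrightarrow> 0" by (rule tendsto_eventually)
    qed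
  qed
  then have hlim0: "(\<lambda>n. \<integral>x. h n x \<partial>\<mu>) \<longlonglongrightarrow> 0" by simp
  show ?thesis
  proof (rule LIMSEQ_I)
    fix r :: real assume r: "0 < r"
    from hlim0 r obtain n where n: "(\<integral>x. h n x \<partial>\<mu>) < r/4"
      by (metis (no_types, lifting) LIMSEQ_D diff_zero real_norm_def abs_less_iff divide_pos_pos zero_less_numeral le_refl)
    have wg: "(\<lambda>k. \<integral>x. g n x \<partial>\<mu>s k) \<longlonglongrightarrow> (\<integral>x. g n x \<partial>\<mu>)"
      using wc gc gb unfolding weak_conv_sph_def by blast
    have wh: "(\<lambda>k. \<integral>x. h n x \<partial>\<mu>s k) \<longlonglongrightarrow> (\<integral>x. h n x \<partial>\<mu>)"
      using wc hc hb unfolding weak_conv_sph_def by blast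
    from LIMSEQ_D[OF wg, of "r/4"] r obtain k1 where k1: "\<And>k. k \<ge> k1 \<Longrightarrow> \<bar>(\<integral>x. g n x \<partial>\<mu>s k) - (\<integral>x. g n x \<partial>\<mu>)\<bar> < r/4"
      by auto
    from LIMSEQ_D[OF wh, of "r/4"] r obtain k2 where k2: "\<And>k. k \<ge> k2 \<Longrightarrow> \<bar>(\<integral>x. h n x \<partial>\<mu>s k) - (\<integral>x. h n x \<partial>\<mu>)\<bar> < r/4"
      by auto
    show "\<exists>no. \<forall>k\<ge>no. norm ((\<integral>x. \<phi> (PU U x) \<partial>\<mu>s k) - (\<integral>x. \<phi> (PU U x) \<partial>\<mu>)) < r"
    proof (intro exI[of _ "max k1 k2"] allI impI)
      fix k assume k: "max k1 k2 \<le> k"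
      have a: "\<bar>(\<integral>x. \<phi> (PU U x) \<partial>\<mu>s k) - (\<integral>x. g n x \<partial>\<mu>s k)\<bar> \<le> (\<integral>x. h n x \<partial>\<mu>s k)"
        by (rule est[OF Pk])
      have b: "\<bar>(\<integral>x. \<phi> (PU U x) \<partial>\<mu>) - (\<integral>x. g n x \<partial>\<mu>)\<bar> \<le> (\<integral>x. h n x \<partial>\<mu>)"
        by (rule est[OF P])
      show "norm ((\<integral>x. \<phi> (PU U x) \<partial>\<mu>s k) - (\<integral>x. \<phi> (PU U x) \<partial>\<mu>)) < r"
        using a b k1[of k] k2[of k] k n unfolding real_norm_def abs_less_iff abs_le_iff by auto
    qed
  qed
qed



lemma hyper_null_lborel:
  fixes u :: "'a::euclidean_space"
  assumes "u \<noteq> 0" shows "{x. u \<bullet> x = 0} \<in> null_sets lborel"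
proof -
  have "negligible {x. u \<bullet> x = 0}" using negligible_hyperplane[of u 0] assms by simp
  then have "{x. u \<bullet> x = 0} \<in> null_sets lebesgue" by (simp add: negligible_iff_null_sets)
  moreover have "{x. u \<bullet> x = 0} \<in> sets lborel"
    by (simp add: borel_closed closed_hyperplane)
  ultimately show ?thesis using null_sets_completion_iff by blast
qed

lemma ball_emeasure: "emeasure lborel (ball (0::'a::euclidean_space) 1) \<noteq> 0"
  "emeasure lborel (ball (0::'a::euclidean_space) 1) \<noteq> \<infinity>"
proof -
  have h: "unit_ball_vol (real DIM('a)) \<noteq> 0"
    using unit_ball_vol_pos[of "real DIM('a)", OF of_nat_0_le_iff] by linarith
  show "emeasure lborel (ball (0::'a::euclidean_space) 1) \<noteq> 0" by (simp add: emeasure_ball h)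
  show "emeasure lborel (ball (0::'a::euclidean_space) 1) \<noteq> \<infinity>"
    using emeasure_lborel_ball_finite[of "0::'a" 1] by simp
qed

lemma sphere_unif_null:
  fixes u :: "'a::euclidean_space"
  assumes "u \<noteq> 0" shows "{x. u \<bullet> x = 0} \<in> null_sets sphere_unif"
proof -
  let ?H = "{x::'a. u \<bullet> x = 0}"
  have Hb: "?H \<in> sets borel" by (simp add: borel_closed closed_hyperplane)
  have nm[measurable]: "(\<lambda>x::'a. x /\<^sub>R norm x) \<in> borel_measurable borel" by measurable
  have pre: "(\<lambda>x::'a. x /\<^sub>R norm x) -` ?H \<inter> space (uniform_measure lborel (ball 0 1)) = ?H" by (auto simp: inner_commute)
  have "emeasure sphere_unif ?H = emeasure (uniform_measure lborel (ball 0 1)) ((\<lambda>x::'a. x /\<^sub>R norm x) -` ?H \<inter> space (uniform_measure lborel (ball 0 1)))"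
    unfolding sphere_unif_def using Hb by (subst emeasure_distr) auto
  also have "\<dots> = emeasure (uniform_measure lborel (ball 0 1)) ?H" by (simp only: pre)
  also have "\<dots> = emeasure lborel (ball 0 1 \<inter> ?H) / emeasure lborel (ball (0::'a) 1)"
    using Hb by (intro emeasure_uniform_measure) auto
  also have "emeasure lborel (ball 0 1 \<inter> ?H) = 0"
  proof -
    have "ball 0 1 \<inter> ?H \<in> sets lborel" using Hb by (simp add: borel_open)
    then have "ball 0 1 \<inter> ?H \<in> null_sets lborel"
      by (rule null_sets_subset[OF hyper_null_lborel[OF assms]]) auto
    then show ?thesis by (rule null_setsD1)
  qed
  finally show ?thesis using Hb by (simp add: null_sets_def sphere_unif_def)
qed

lemma Pac_basic: assumes "\<mu> \<in> Pac p" shows "prob_space \<mu>" "sets \<mu> = sets borel"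
  using assms by (auto simp: Pac_def)

lemma Pac_null:
  assumes "\<mu> \<in> Pac p" "fst U \<noteq> 0"
  shows "emeasure \<mu> {x. projU U x = 0} = 0"
proof -
  have "{x. fst U \<bullet> x = 0} \<in> null_sets \<mu>"
    using assms sphere_unif_null[OF assms(2)] by (auto simp: Pac_def absolutely_continuous_def)
  moreover have "{x. projU U x = 0} \<subseteq> {x. fst U \<bullet> x = 0}" by (auto simp: projU_def complex_eq_iff)
  moreover have "{x. projU U x = 0} \<in> sets \<mu>"
  proof -
    have "closed {x. projU U x = 0}" unfolding projU_def Complex_eq
      by (intro closed_Collect_eq continuous_intros)
    then show ?thesis using Pac_basic(2)[OF assms(1)] by (simp add: borel_closed)
  qed
  ultimately show ?thesis by (meson null_sets_subset null_setsD1)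
qed


lemma stiefel_sets: "sets (stiefel_unif :: ('a::euclidean_space \<times> 'a) measure) = sets borel"
  by (simp add: stiefel_unif_def)

lemma gs_meas: "gram_schmidt2 \<in> borel_measurable (borel :: ('a::euclidean_space \<times> 'a) measure)"
  unfolding gram_schmidt2_def Let_def case_prod_beta by (simp only: borel_prod[symmetric]) measurable

lemma ballball:
  "emeasure lborel (ball (0::'a::euclidean_space) 1 \<times> ball (0::'a) 1) \<noteq> 0"
  "emeasure lborel (ball (0::'a::euclidean_space) 1 \<times> ball (0::'a) 1) \<noteq> \<infinity>"
proof -
  have e: "emeasure lborel (ball (0::'a) 1 \<times> ball (0::'a) 1) = emeasure lborel (ball (0::'a) 1) * emeasure lborel (ball (0::'a) 1)"
    by (subst lborel_prod[symmetric]) (rule lborel.emeasure_pair_measure_Times, auto)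
  show "emeasure lborel (ball (0::'a::euclidean_space) 1 \<times> ball (0::'a) 1) \<noteq> 0"
    unfolding e using ball_emeasure[where 'a='a] by simp
  show "emeasure lborel (ball (0::'a::euclidean_space) 1 \<times> ball (0::'a) 1) \<noteq> \<infinity>"
    unfolding e using ball_emeasure[where 'a='a] by (simp add: ennreal_mult_eq_top_iff)
qed

lemma stiefel_prob: "prob_space (stiefel_unif :: ('a::euclidean_space \<times> 'a) measure)"
  unfolding stiefel_unif_def
  by (rule prob_space.prob_space_distr[OF prob_space_uniform_measure[OF ballball]])
     (subst measurable_cong_sets[where M'=borel and N'=borel], simp_all add: gs_meas)

lemma AE_unif: assumes "A \<in> sets M" "AE x in M. P x" shows "AE x in uniform_measure M A. P x"
  unfolding uniform_measure_def using assms by (subst AE_density) (auto elim: AE_mp)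

lemma stiefel_AE: "AE U in (stiefel_unif :: ('a::euclidean_space \<times> 'a) measure). fst U \<noteq> 0"
proof -
  have s: "{U \<in> space (borel :: ('a \<times> 'a) measure). fst U \<noteq> 0} \<in> sets borel"
  proof -
    have "open {U :: 'a \<times> 'a. fst U \<noteq> 0}" by (intro open_Collect_neq continuous_intros)
    then show ?thesis by (simp add: borel_open)
  qed
  have gsm: "gram_schmidt2 \<in> uniform_measure lborel (ball (0::'a) 1 \<times> ball (0::'a) 1) \<rightarrow>\<^sub>M (borel :: ('a \<times> 'a) measure)"
    by (subst measurable_cong_sets[where M'=borel and N'=borel], simp_all add: gs_meas)
  have nul: "{0::'a} \<times> (UNIV :: 'a set) \<in> null_sets (lborel \<Otimes>\<^sub>M lborel)"
    by (rule lborel.times_in_null_sets1) (auto intro: finite_imp_null_set_lborel)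
  have "AE xy in (lborel :: ('a \<times> 'a) measure). fst xy \<noteq> 0"
    unfolding lborel_prod[symmetric] by (rule AE_I'[OF nul]) (auto simp: space_pair_measure)
  then have "AE xy in uniform_measure lborel (ball (0::'a) 1 \<times> ball (0::'a) 1). fst xy \<noteq> 0"
    by (rule AE_unif[rotated]) (simp add: borel_open open_Times)
  then have "AE xy in uniform_measure lborel (ball (0::'a) 1 \<times> ball (0::'a) 1). fst (gram_schmidt2 xy) \<noteq> 0"
    by (rule AE_mp) (auto simp: gram_schmidt2_def Let_def case_prod_beta)
  then show ?thesis unfolding stiefel_unif_def by (subst AE_distr_iff[OF gsm s])
qed



lemma chord_eq:
  assumes "cmod z = 1" "cmod w = 1"
  shows "(cmod (z - w))^2 = 2 - 2 * Re (z * cnj w)"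
proof -
  have z2: "(Re z)^2 + (Im z)^2 = 1" and w2: "(Re w)^2 + (Im w)^2 = 1"
    using assms by (simp_all add: cmod_power2[symmetric])
  have "(cmod (z - w))^2 = (Re z - Re w)^2 + (Im z - Im w)^2" by (simp add: cmod_power2)
  also have "\<dots> = (Re z)^2 + (Im z)^2 + ((Re w)^2 + (Im w)^2) - 2 * (Re z * Re w + Im z * Im w)"
    by (simp add: power2_eq_square algebra_simps)
  finally show ?thesis using z2 w2 by simp
qed

lemma dS1_small:
  assumes e: "0 < e" and p: "0 < p"
  shows "\<exists>c>0. \<forall>z w. cmod z = 1 \<longrightarrow> cmod w = 1 \<longrightarrow> cmod (z - w) < c \<longrightarrow> dS1 z w powr p \<le> e"
proof -
  define \<theta> where "\<theta> = e powr (1/p)"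
  have \<theta>: "0 < \<theta>" using e by (simp add: \<theta>_def)
  have "continuous_on {-1..1} arccos" by (rule continuous_on_arccos')
  from this[unfolded continuous_on_iff, rule_format, of 1 \<theta>] \<theta>
  obtain d where d: "d > 0" "\<And>y. y \<in> {-1..1} \<Longrightarrow> dist y 1 < d \<Longrightarrow> dist (arccos y) (arccos 1) < \<theta>"
    by auto
  show ?thesis
  proof (intro exI[of _ "sqrt (2*d)"] conjI allI impI)
    show "0 < sqrt (2*d)" using d by simp
    fix z w assume z: "cmod z = 1" and w: "cmod w = 1" and zw: "cmod (z - w) < sqrt (2*d)"
    have "(cmod (z - w))^2 < 2*d" using zw d
      by (metis norm_ge_zero real_sqrt_less_iff real_sqrt_unique abs_of_nonneg real_sqrt_abs)
    then have "1 - Re (z * cnj w) < d" using chord_eq[OF z w] by simp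
    moreover have "Re (z * cnj w) \<in> {-1..1}"
    proof -
      have "\<bar>Re (z * cnj w)\<bar> \<le> cmod (z * cnj w)" by (rule abs_Re_le_cmod)
      then show ?thesis using z w by (auto simp: norm_mult)
    qed
    ultimately have "dist (arccos (Re (z * cnj w))) (arccos 1) < \<theta>"
      using d(2) by (auto simp: dist_real_def)
    then have "dS1 z w < \<theta>" by (simp add: dS1_def dist_real_def)
    moreover have "0 \<le> dS1 z w" using \<open>Re (z * cnj w) \<in> {-1..1}\<close> by (simp add: dS1_def arccos_lbound)
    ultimately have "dS1 z w powr p \<le> \<theta> powr p" using p by (intro powr_mono2) auto
    also have "\<dots> = e" using e p by (simp add: \<theta>_def powr_powr)
    finally show "dS1 z w powr p \<le> e" .
  qed
qed


lemma pou:
  assumes \<delta>: "0 < \<delta>"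
  obtains T :: "complex set" and \<phi> :: "complex \<Rightarrow> complex \<Rightarrow> real"
  where "finite T" "\<And>t. continuous_on UNIV (\<phi> t)" "\<And>t z. 0 \<le> \<phi> t z" "\<And>t z. t \<in> T \<Longrightarrow> \<phi> t z \<le> 1"
    "\<And>z. cmod z = 1 \<Longrightarrow> (\<Sum>t\<in>T. \<phi> t z) = 1"
    "\<And>t z. 0 < \<phi> t z \<Longrightarrow> dist z t < \<delta>"
proof -
  have "seq_compact (sphere (0::complex) 1)" by (intro compact_imp_seq_compact compact_sphere)
  from seq_compact_imp_totally_bounded[OF this, rule_format, of "\<delta>/2"] \<delta>
  obtain T where T: "finite T" "T \<subseteq> sphere 0 1" "sphere (0::complex) 1 \<subseteq> (\<Union>x\<in>T. ball x (\<delta>/2))" by auto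
  define \<psi> where "\<psi> t z = max 0 (\<delta> - dist z t)" for t z :: complex
  define \<phi> where "\<phi> t z = \<psi> t z / max (\<Sum>s\<in>T. \<psi> s z) (\<delta>/2)" for t z
  have \<psi>0: "0 \<le> \<psi> t z" for t z by (simp add: \<psi>_def)
  have \<psi>c: "continuous_on UNIV (\<psi> t)" for t unfolding \<psi>_def by (intro continuous_intros)
  have den: "0 < max (\<Sum>s\<in>T. \<psi> s z) (\<delta>/2)" for z using \<delta> by simp
  show ?thesis
  proof
    show "finite T" by fact
    show "continuous_on UNIV (\<phi> t)" for t
    proof -
      have nz: "\<forall>z\<in>UNIV. max (\<Sum>s\<in>T. \<psi> s z) (\<delta>/2) \<noteq> 0" using den by (metis less_irrefl)
      show ?thesis unfolding \<phi>_def
        by (intro continuous_on_divide continuous_on_max continuous_on_sum \<psi>c continuous_on_const nz)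
    qed
    show "0 \<le> \<phi> t z" for t z unfolding \<phi>_def using den[of z] \<psi>0[of t z] by simp
    show "\<phi> t z \<le> 1" if "t \<in> T" for t z
    proof -
      have "\<psi> t z \<le> (\<Sum>s\<in>T. \<psi> s z)" using T(1) \<psi>0 that by (intro member_le_sum) auto
      then have "\<psi> t z \<le> max (\<Sum>s\<in>T. \<psi> s z) (\<delta>/2)" by simp
      then show ?thesis unfolding \<phi>_def using den[of z] by (simp add: divide_le_eq_1)
    qed
    show "(\<Sum>t\<in>T. \<phi> t z) = 1" if z: "cmod z = 1" for z
    proof -
      from z T(3) obtain t where t: "t \<in> T" "dist t z < \<delta>/2" by (auto simp: dist_commute)
      have "\<delta>/2 \<le> \<psi> t z" using t unfolding \<psi>_def by (simp add: dist_commute max_def)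
      also have "\<psi> t z \<le> (\<Sum>s\<in>T. \<psi> s z)" using T(1) \<psi>0 t by (intro member_le_sum) auto
      finally have "max (\<Sum>s\<in>T. \<psi> s z) (\<delta>/2) = (\<Sum>s\<in>T. \<psi> s z)" by simp
      then show ?thesis unfolding \<phi>_def using den[of z] by (simp add: sum_divide_distrib[symmetric])
    qed
    show "dist z t < \<delta>" if "0 < \<phi> t z" for t z
      using that den[of z] unfolding \<phi>_def \<psi>_def by (auto simp: zero_less_divide_iff)
  qed
qed



lemma int_meas:
  fixes M :: "'a::euclidean_space measure" and \<phi> :: "complex \<Rightarrow> real"
  assumes "sets M = sets borel" "prob_space M" "continuous_on UNIV \<phi>"
  shows "(\<lambda>U. \<integral>x. \<phi> (PU U x) \<partial>M) \<in> borel_measurable (stiefel_unif :: ('a \<times> 'a) measure)"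
proof -
  interpret prob_space M by fact
  have \<phi>m: "\<phi> \<in> borel_measurable borel" by (rule borel_measurable_continuous_onI[OF assms(3)])
  have "(\<lambda>Ux. \<phi> (PU (fst Ux) (snd Ux))) \<in> borel_measurable (borel :: (('a \<times> 'a) \<times> 'a) measure)"
    by (rule measurable_compose[OF PU_meas_joint \<phi>m])
  then have "(\<lambda>Ux. \<phi> (PU (fst Ux) (snd Ux))) \<in> borel_measurable ((stiefel_unif :: ('a \<times> 'a) measure) \<Otimes>\<^sub>M M)"
    by (subst measurable_cong_sets[where M'="borel \<Otimes>\<^sub>M borel" and N'=borel])
       (simp_all add: sets_pair_measure_cong[OF stiefel_sets assms(1)] borel_prod)
  then have "(\<lambda>(U,x). \<phi> (PU U x)) \<in> borel_measurable ((stiefel_unif :: ('a \<times> 'a) measure) \<Otimes>\<^sub>M M)"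
    by (simp add: case_prod_beta')
  then show ?thesis by (rule borel_measurable_lebesgue_integral)
qed


theorem mainTheorem8:
  fixes p :: real and \<mu>s :: "nat \<Rightarrow> 'a::euclidean_space measure" and \<mu> :: "'a measure"
  assumes "DIM('a) \<ge> 2" and "p \<ge> 1"
    and "\<And>k. \<mu>s k \<in> Pac p" and "\<mu> \<in> Pac p"
    and "weak_conv_sph \<mu>s \<mu>"
  shows "(\<lambda>k. SSW p (\<mu>s k) \<mu>) \<longlonglongrightarrow> 0"
proof -
  have Pk: "prob_space (\<mu>s k)" "sets (\<mu>s k) = sets borel" for k using Pac_basic[OF assms(3)] by auto
  have P: "prob_space \<mu>" "sets \<mu> = sets borel" using Pac_basic[OF assms(4)] by auto
  have p0: "0 < p" using assms(2) by simp
  interpret S: prob_space "(stiefel_unif :: ('a \<times> 'a) measure) :: ('a \<times> 'a) measure" by (rule stiefel_prob)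
  define Q where "Q k = SSWpp p (\<mu>s k) \<mu>" for k
  have key: "eventually (\<lambda>k. Q k \<le> ennreal \<epsilon>) sequentially" if \<epsilon>: "0 < \<epsilon>" for \<epsilon>
  proof -
    define e where "e = \<epsilon> / 3"
    have e0: "0 < e" using \<epsilon> by (simp add: e_def)
    obtain c where c: "c > 0" and cc: "\<And>z w. cmod z = 1 \<Longrightarrow> cmod w = 1 \<Longrightarrow> cmod (z - w) < c \<Longrightarrow> dS1 z w powr p \<le> e"
      using dS1_small[OF e0 p0] by blast
    have pex: "\<exists>T \<phi>. finite T \<and> (\<forall>t. continuous_on UNIV (\<phi> t)) \<and> (\<forall>t z. 0 \<le> \<phi> t z)
      \<and> (\<forall>t\<in>T. \<forall>z. \<phi> t z \<le> (1::real)) \<and> (\<forall>z. cmod z = 1 \<longrightarrow> (\<Sum>t\<in>T. \<phi> t z) = 1)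
      \<and> (\<forall>t z. 0 < \<phi> t z \<longrightarrow> dist z (t::complex) < c/2)"
    proof (rule pou[OF half_gt_zero[OF c]])
      fix T :: "complex set" and \<phi> :: "complex \<Rightarrow> complex \<Rightarrow> real"
      assume a: "finite T" "\<And>t. continuous_on UNIV (\<phi> t)" "\<And>t z. 0 \<le> \<phi> t z" "\<And>t z. t \<in> T \<Longrightarrow> \<phi> t z \<le> 1"
        "\<And>z. cmod z = 1 \<Longrightarrow> (\<Sum>t\<in>T. \<phi> t z) = 1" "\<And>t z. 0 < \<phi> t z \<Longrightarrow> dist z t < c/2"
      have b: "(\<forall>t. continuous_on UNIV (\<phi> t))" "(\<forall>t z. 0 \<le> \<phi> t z)"
        "(\<forall>t\<in>T. \<forall>z. \<phi> t z \<le> (1::real))" "(\<forall>z. cmod z = 1 \<longrightarrow> (\<Sum>t\<in>T. \<phi> t z) = 1)"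
        "(\<forall>t z. 0 < \<phi> t z \<longrightarrow> dist z (t::complex) < c/2)"
        using a(2-6) by blast+
      show ?thesis
        by (rule exI[of _ T], rule exI[of _ \<phi>], intro conjI a(1) b)
    qed
    then obtain T :: "complex set" and \<phi> :: "complex \<Rightarrow> complex \<Rightarrow> real" where
      pp: "finite T \<and> (\<forall>t. continuous_on UNIV (\<phi> t)) \<and> (\<forall>t z. 0 \<le> \<phi> t z)
      \<and> (\<forall>t\<in>T. \<forall>z. \<phi> t z \<le> (1::real)) \<and> (\<forall>z. cmod z = 1 \<longrightarrow> (\<Sum>t\<in>T. \<phi> t z) = 1)
      \<and> (\<forall>t z. 0 < \<phi> t z \<longrightarrow> dist z (t::complex) < c/2)" by blast
    have T: "finite T" and \<phi>c: "\<And>t. continuous_on UNIV (\<phi> t)"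
      and \<phi>0: "\<And>t z. 0 \<le> \<phi> t z" and \<phi>1: "\<And>t z. t \<in> T \<Longrightarrow> \<phi> t z \<le> 1"
      and \<phi>sum: "\<And>z. cmod z = 1 \<Longrightarrow> (\<Sum>t\<in>T. \<phi> t z) = 1"
      and \<phi>d: "\<And>t z. 0 < \<phi> t z \<Longrightarrow> dist z t < c/2"
      using pp by auto
    define K where "K = pi powr p"
    have K0: "0 < K" by (simp add: K_def)
    define \<eta> where "\<eta> = min 1 (\<epsilon> / (3 * K))"
    have \<eta>0: "0 < \<eta>" "\<eta> \<le> 1" using \<epsilon> K0 by (auto simp: \<eta>_def)
    have K\<eta>: "K * \<eta> \<le> \<epsilon> / 3"
    proof -
      have "K * \<eta> \<le> K * (\<epsilon> / (3 * K))" using K0 by (intro mult_left_mono) (auto simp: \<eta>_def)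
      also have "\<dots> = \<epsilon> / 3" using K0 by simp
      finally show ?thesis .
    qed
    define A where "A t k U = (\<integral>x. \<phi> t (PU U x) \<partial>\<mu>s k)" for t k U
    define B where "B t U = (\<integral>x. \<phi> t (PU U x) \<partial>\<mu>)" for t U
    define D where "D t k U = \<bar>A t k U - B t U\<bar>" for t k U
    have Am: "A t k \<in> borel_measurable (stiefel_unif :: ('a \<times> 'a) measure)" for t k
      unfolding A_def by (rule int_meas[OF Pk(2) Pk(1) \<phi>c])
    have Bm: "B t \<in> borel_measurable (stiefel_unif :: ('a \<times> 'a) measure)" for t
      unfolding B_def by (rule int_meas[OF P(2) P(1) \<phi>c])
    have Dm[measurable]: "D t k \<in> borel_measurable (stiefel_unif :: ('a \<times> 'a) measure)" for t k
      unfolding D_def using Am Bm by measurable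
    have int01: "0 \<le> (\<integral>x. \<phi> t (PU U x) \<partial>M) \<and> (\<integral>x. \<phi> t (PU U x) \<partial>M) \<le> 1"
      if M: "prob_space M" "sets M = sets borel" and t: "t \<in> T" for M t U
    proof -
      interpret prob_space M by fact
      have fm: "(\<lambda>x. \<phi> t (PU U x)) \<in> borel_measurable M"
        by (subst measurable_cong_sets[OF M(2) refl])
           (rule measurable_compose[OF PU_meas borel_measurable_continuous_onI[OF \<phi>c]])
      have ib: "integrable M (\<lambda>x. \<phi> t (PU U x))"
        by (rule integrable_const_bound[where B=1]) (use fm \<phi>0 \<phi>1[OF t] in auto)
      have "(\<integral>x. \<phi> t (PU U x) \<partial>M) \<le> (\<integral>x. 1 \<partial>M)"
        using ib \<phi>1[OF t] by (intro integral_mono) auto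
      then show ?thesis using \<phi>0 by (simp add: prob_space integral_nonneg_AE)
    qed
    have Dle: "D t k U \<le> 1" "0 \<le> D t k U" if "t \<in> T" for t k U
      using int01[OF Pk that, of k U] int01[OF P that, of U] unfolding D_def A_def B_def by auto
    have Dlim: "(\<lambda>k. \<integral>U. D t k U \<partial>(stiefel_unif :: ('a \<times> 'a) measure)) \<longlonglongrightarrow> (\<integral>U. 0 \<partial>(stiefel_unif :: ('a \<times> 'a) measure))" if t: "t \<in> T" for t
    proof (rule integral_dominated_convergence[where w="\<lambda>_. 1"])
      show "(\<lambda>_. 0::real) \<in> borel_measurable (stiefel_unif :: ('a \<times> 'a) measure)" by simp
      show "D t k \<in> borel_measurable (stiefel_unif :: ('a \<times> 'a) measure)" for k by (rule Dm)
      show "integrable (stiefel_unif :: ('a \<times> 'a) measure) (\<lambda>_. 1::real)" by simp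
      show "AE U in (stiefel_unif :: ('a \<times> 'a) measure). norm (D t k U) \<le> 1" for k using Dle[OF t] by simp
      show "AE U in (stiefel_unif :: ('a \<times> 'a) measure). (\<lambda>k. D t k U) \<longlonglongrightarrow> 0" using stiefel_AE
      proof eventually_elim
        fix U :: "'a \<times> 'a" assume U: "fst U \<noteq> 0"
        have "(\<lambda>k. A t k U) \<longlonglongrightarrow> B t U" unfolding A_def B_def
          by (rule conv_U[OF Pk P assms(5) Pac_null[OF assms(4) U] \<phi>c \<phi>0])
             (use \<phi>1[OF t] in auto)
        then have "(\<lambda>k. \<bar>A t k U - B t U\<bar>) \<longlonglongrightarrow> \<bar>B t U - B t U\<bar>"
          by (intro tendsto_intros)
        then show "(\<lambda>k. D t k U) \<longlonglongrightarrow> 0" by (simp add: D_def)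
      qed
    qed
    have "(\<lambda>k. \<Sum>t\<in>T. \<integral>U. D t k U \<partial>(stiefel_unif :: ('a \<times> 'a) measure)) \<longlonglongrightarrow> (\<Sum>t\<in>T. 0)"
      using Dlim by (intro tendsto_sum) simp
    then have "eventually (\<lambda>k. (\<Sum>t\<in>T. \<integral>U. D t k U \<partial>(stiefel_unif :: ('a \<times> 'a) measure)) < \<epsilon> / (3 * K)) sequentially"
      using \<epsilon> K0 by (intro order_tendstoD) auto
    then show ?thesis
    proof eventually_elim
      case (elim k)
      have cb: "Wpp_S1 p (distr (\<mu>s k) borel (PU U)) (distr \<mu> borel (PU U)) \<le> ennreal (e + K * (\<eta> + (\<Sum>t\<in>T. D t k U)))" for U
        unfolding D_def A_def B_def K_def
      proof (rule coupling_bound[OF Pk P PU_meas PU_norm T \<phi>c \<phi>0 \<phi>sum _ p0 _ \<eta>0])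
        show "0 \<le> e" using e0 by simp
        fix t z w assume t: "t \<in> T" and z: "cmod z = 1" and w: "cmod w = 1" and pz: "0 < \<phi> t z" and pw: "0 < \<phi> t w"
        have "cmod (z - w) = dist z w" by (simp add: dist_norm)
        also have "\<dots> \<le> dist z t + dist w t" by (rule dist_triangle2)
        also have "\<dots> < c" using \<phi>d[OF pz] \<phi>d[OF pw] by simp
        finally show "dS1 z w powr p \<le> e" by (rule cc[OF z w])
      qed
      have Di: "integrable (stiefel_unif :: ('a \<times> 'a) measure) (D t k)" if "t \<in> T" for t
        by (rule S.integrable_const_bound[where B=1]) (use Dle[OF that] in auto)
      have "Q k = (\<integral>\<^sup>+ U. Wpp_S1 p (distr (\<mu>s k) borel (PU U)) (distr \<mu> borel (PU U)) \<partial>(stiefel_unif :: ('a \<times> 'a) measure))"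
        by (simp add: Q_def SSWpp_def)
      also have "\<dots> \<le> (\<integral>\<^sup>+ U. ennreal (e + K * (\<eta> + (\<Sum>t\<in>T. D t k U))) \<partial>(stiefel_unif :: ('a \<times> 'a) measure))"
        by (intro nn_integral_mono cb)
      also have "\<dots> = ennreal (\<integral>U. e + K * (\<eta> + (\<Sum>t\<in>T. D t k U)) \<partial>(stiefel_unif :: ('a \<times> 'a) measure))"
      proof (rule nn_integral_eq_integral)
        show "integrable (stiefel_unif :: ('a \<times> 'a) measure) (\<lambda>U. e + K * (\<eta> + (\<Sum>t\<in>T. D t k U)))" using Di by auto
        show "AE U in (stiefel_unif :: ('a \<times> 'a) measure). 0 \<le> e + K * (\<eta> + (\<Sum>t\<in>T. D t k U))"
          using e0 K0 \<eta>0 Dle by (auto intro!: add_nonneg_nonneg mult_nonneg_nonneg sum_nonneg)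
      qed
      also have "(\<integral>U. e + K * (\<eta> + (\<Sum>t\<in>T. D t k U)) \<partial>(stiefel_unif :: ('a \<times> 'a) measure)) = e + K * (\<eta> + (\<Sum>t\<in>T. \<integral>U. D t k U \<partial>(stiefel_unif :: ('a \<times> 'a) measure)))"
        using Di by (simp add: Bochner_Integration.integral_sum S.prob_space)
      also have "\<dots> \<le> ennreal \<epsilon>"
      proof (rule ennreal_leI)
        have "K * (\<Sum>t\<in>T. \<integral>U. D t k U \<partial>(stiefel_unif :: ('a \<times> 'a) measure)) \<le> K * (\<epsilon> / (3 * K))"
          using elim K0 by (intro mult_left_mono) auto
        also have "\<dots> = \<epsilon> / 3" using K0 by simp
        finally show "e + K * (\<eta> + (\<Sum>t\<in>T. \<integral>U. D t k U \<partial>(stiefel_unif :: ('a \<times> 'a) measure))) \<le> \<epsilon>"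
          using K\<eta> by (simp add: e_def distrib_left)
      qed
      finally show ?case .
    qed
  qed
  have Qlim: "(\<lambda>k. enn2real (Q k)) \<longlonglongrightarrow> 0"
  proof (rule LIMSEQ_I)
    fix r :: real assume r: "0 < r"
    from key[of "r/2"] r obtain N where N: "\<And>k. k \<ge> N \<Longrightarrow> Q k \<le> ennreal (r/2)"
      by (auto simp: eventually_sequentially)
    show "\<exists>no. \<forall>n\<ge>no. norm (enn2real (Q n) - 0) < r"
    proof (intro exI[of _ N] allI impI)
      fix n assume "N \<le> n"
      then have "enn2real (Q n) \<le> r/2" using r by (intro enn2real_leI N) auto
      then show "norm (enn2real (Q n) - 0) < r" using r by simp
    qed
  qed
  have "(\<lambda>k. enn2real (Q k) powr (1/p)) \<longlonglongrightarrow> 0"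
    by (rule tendsto_zero_powrI[OF Qlim tendsto_const]) (use p0 in auto)
  then show ?thesis by (simp add: SSW_def Q_def)
qed


end
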